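(* Let $m\ge 3$ and $n\ge 5$ be integers, let $\Gamma=C_m\Box C_n$ with vertex set $\{0,\dots,m-1\}\times\{0,\dots,n-1\}$, and let $S$ be a disjunctive dominating set of $\Gamma$. For $j\in\mathbb Z$ let $x_j=|S\cap T_j|$, where $T_j=\{(i,j')\,:\,0\le i\le m-1\}$ with $j'\equiv j\pmod n$, $0\le j'\le n-1$ (so indices are read modulo $n$). Then for every $j=0,1,\dots,n-1$, $$x_{j-2}+4x_{j-1}+8x_j+4x_{j+1}+x_{j+2}\ge 2m.$$
   Context: $C_k$ denotes the cycle with vertex set $\{0,\dots,k-1\}$, where $i,j$ are adjacent iff $i-j\equiv\pm1\pmod k$. $G\Box H$ is the Cartesian product: vertex set $V(G)\times V(H)$, with $(g,h)\sim(g',h')$ iff either $g=g'$ and $hh'\in E(H)$, or $h=h'$ and $gg'\in E(G)$. For a graph $\Gamma$ and vertex $v$, $\Gamma(v)$ is the set of vertices at distance $1$ from $v$ and $\Gamma_2(v)$ the set at distance exactly $2$. A set $S\subseteq V(\Gamma)$ is a disjunctive dominating set if every vertex $v\notin S$ satisfies $|\Gamma(v)\cap S|\ge 1$ or $|\Gamma_2(v)\cap S|\ge 2$. *)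

theory Defs
  imports Main
begin

definition cycle_adj :: "nat \<Rightarrow> nat \<Rightarrow> nat \<Rightarrow> bool" where
  "cycle_adj k i j \<longleftrightarrow> i < k \<and> j < k \<and> ((i + 1) mod k = j \<or> (j + 1) mod k = i)"

definition cycle_verts :: "nat \<Rightarrow> nat set" where
  "cycle_verts k = {0..<k}"

definition cart_adj :: "('a \<Rightarrow> 'a \<Rightarrow> bool) \<Rightarrow> ('b \<Rightarrow> 'b \<Rightarrow> bool) \<Rightarrow> ('a \<times> 'b) \<Rightarrow> ('a \<times> 'b) \<Rightarrow> bool" where
  "cart_adj EG EH p q \<longleftrightarrow>
     (fst p = fst q \<and> EH (snd p) (snd q)) \<or> (snd p = snd q \<and> EG (fst p) (fst q))"

fun walk_len :: "'a set \<Rightarrow> ('a \<Rightarrow> 'a \<Rightarrow> bool) \<Rightarrow> nat \<Rightarrow> 'a \<Rightarrow> 'a \<Rightarrow> bool" where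
  "walk_len V E 0 u v \<longleftrightarrow> u \<in> V \<and> u = v"
| "walk_len V E (Suc k) u v \<longleftrightarrow> u \<in> V \<and> (\<exists>w. E u w \<and> walk_len V E k w v)"

definition at_dist :: "'a set \<Rightarrow> ('a \<Rightarrow> 'a \<Rightarrow> bool) \<Rightarrow> nat \<Rightarrow> 'a \<Rightarrow> 'a \<Rightarrow> bool" where
  "at_dist V E d u v \<longleftrightarrow> walk_len V E d u v \<and> (\<forall>k<d. \<not> walk_len V E k u v)"

definition nbhd :: "'a set \<Rightarrow> ('a \<Rightarrow> 'a \<Rightarrow> bool) \<Rightarrow> nat \<Rightarrow> 'a \<Rightarrow> 'a set" where
  "nbhd V E d v = {u \<in> V. at_dist V E d v u}"

definition disj_dom_set :: "'a set \<Rightarrow> ('a \<Rightarrow> 'a \<Rightarrow> bool) \<Rightarrow> 'a set \<Rightarrow> bool" where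
  "disj_dom_set V E S \<longleftrightarrow> S \<subseteq> V \<and>
     (\<forall>v \<in> V - S. card (nbhd V E 1 v \<inter> S) \<ge> 1 \<or> card (nbhd V E 2 v \<inter> S) \<ge> 2)"

definition torus_verts :: "nat \<Rightarrow> nat \<Rightarrow> (nat \<times> nat) set" where
  "torus_verts m n = cycle_verts m \<times> cycle_verts n"

definition torus_adj :: "nat \<Rightarrow> nat \<Rightarrow> (nat \<times> nat) \<Rightarrow> (nat \<times> nat) \<Rightarrow> bool" where
  "torus_adj m n = cart_adj (cycle_adj m) (cycle_adj n)"

definition col :: "nat \<Rightarrow> nat \<Rightarrow> int \<Rightarrow> (nat \<times> nat) set" where
  "col m n j = {(i, nat (j mod int n)) | i. i < m}"

end

theory Submission
  imports Defs
begin

definition rp :: "nat \<Rightarrow> nat \<Rightarrow> nat" where "rp k a = (a + 1) mod k"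
definition rm :: "nat \<Rightarrow> nat \<Rightarrow> nat" where "rm k a = (a + k - 1) mod k"

lemma adj_cases: "cycle_adj k i j \<Longrightarrow> j = rp k i \<or> j = rm k i"
proof -
  assume h: "cycle_adj k i j"
  then have ik: "i < k" "j < k" unfolding cycle_adj_def by auto
  show ?thesis
  proof (cases "(i + 1) mod k = j")
    case True then show ?thesis by (simp add: rp_def)
  next
    case False
    then have e: "(j + 1) mod k = i" using h unfolding cycle_adj_def by auto
    show ?thesis
    proof (cases "j + 1 < k")
      case True
      then have "i = j + 1" using e by simp
      then have "i + k - 1 = j + k" by simp
      then show ?thesis using ik by (simp add: rm_def)
    next
      case False
      then have "j + 1 = k" using ik by simp
      then have "i = 0" using e by simp
      then have "k = Suc j" using \<open>j + 1 = k\<close> by simp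
      then show ?thesis using \<open>i = 0\<close> by (simp add: rm_def)
    qed
  qed
qed

lemma rm_rp: "a < k \<Longrightarrow> rm k (rp k a) = a"
proof -
  assume a: "a < k"
  show ?thesis
  proof (cases "a + 1 < k")
    case True
    then have "rp k a = a + 1" by (simp add: rp_def)
    then show ?thesis using a by (simp add: rm_def)
  next
    case False
    then have "a + 1 = k" using a by simp
    then have "rp k a = 0" by (simp add: rp_def)
    then show ?thesis using \<open>a + 1 = k\<close> by (simp add: rm_def)
  qed
qed

lemma rp_rm: "a < k \<Longrightarrow> rp k (rm k a) = a"
proof -
  assume a: "a < k"
  show ?thesis
  proof (cases "a = 0")
    case True
    then have "rm k a = k - 1" using a by (simp add: rm_def)
    then show ?thesis using a True by (simp add: rp_def)
  next
    case False
    obtain b where b: "a = Suc b" using False by (cases a) auto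
    have "rm k a = (b + k) mod k" unfolding rm_def b by simp
    also have "\<dots> = b" using a b by simp
    finally show ?thesis using a b by (simp add: rp_def)
  qed
qed

lemma rp_lt: "0 < k \<Longrightarrow> rp k a < k" by (simp add: rp_def)
lemma rm_lt: "0 < k \<Longrightarrow> rm k a < k" by (simp add: rm_def)

lemma torus_adj_cases:
  "torus_adj m n (a,b) q \<Longrightarrow> q \<in> {(rp m a,b),(rm m a,b),(a,rp n b),(a,rm n b)}"
proof -
  obtain c d where q: "q = (c,d)" by (cases q)
  assume "torus_adj m n (a,b) q"
  then have "(a = c \<and> cycle_adj n b d) \<or> (b = d \<and> cycle_adj m a c)"
    unfolding torus_adj_def cart_adj_def q by simp
  then show ?thesis
  proof
    assume h: "a = c \<and> cycle_adj n b d"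
    then have "d = rp n b \<or> d = rm n b" using adj_cases by blast
    then show ?thesis using h q by auto
  next
    assume h: "b = d \<and> cycle_adj m a c"
    then have "c = rp m a \<or> c = rm m a" using adj_cases by blast
    then show ?thesis using h q by auto
  qed
qed

definition L1 :: "nat \<Rightarrow> nat \<Rightarrow> nat \<Rightarrow> nat \<Rightarrow> (nat \<times> nat) list" where
  "L1 m n a b = [(rp m a,b),(rm m a,b),(a,rp n b),(a,rm n b)]"

definition L2 :: "nat \<Rightarrow> nat \<Rightarrow> nat \<Rightarrow> nat \<Rightarrow> (nat \<times> nat) list" where
  "L2 m n a b = [(rp m (rp m a),b),(rm m (rm m a),b),(a,rp n (rp n b)),(a,rm n (rm n b)),
     (rp m a,rp n b),(rp m a,rm n b),(rm m a,rp n b),(rm m a,rm n b)]"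

lemma nb1: "nbhd V (torus_adj m n) 1 (a,b) \<subseteq> set (L1 m n a b)"
proof
  fix u assume "u \<in> nbhd V (torus_adj m n) 1 (a,b)"
  then have "walk_len V (torus_adj m n) (Suc 0) (a,b) u" unfolding nbhd_def at_dist_def by simp
  then have "torus_adj m n (a,b) u" by auto
  then show "u \<in> set (L1 m n a b)" using torus_adj_cases unfolding L1_def by auto
qed

lemma nb2:
  assumes "a < m" "b < n"
  shows "nbhd V (torus_adj m n) 2 (a,b) \<subseteq> set (L2 m n a b)"
proof
  fix u assume "u \<in> nbhd V (torus_adj m n) 2 (a,b)"
  then have w: "walk_len V (torus_adj m n) (Suc (Suc 0)) (a,b) u"
    and nw: "\<not> walk_len V (torus_adj m n) 0 (a,b) u"
    unfolding nbhd_def at_dist_def numeral_2_eq_2 by auto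
  from w have "(a,b) \<in> V" by simp
  with nw have ne: "u \<noteq> (a,b)" by auto
  from w obtain w where e1: "torus_adj m n (a,b) w" and e2: "torus_adj m n w u" by auto
  from e1 have "w \<in> {(rp m a,b),(rm m a,b),(a,rp n b),(a,rm n b)}" by (rule torus_adj_cases)
  then show "u \<in> set (L2 m n a b)"
  proof (elim insertE)
    assume "w = (rp m a, b)"
    then have "u \<in> {(rp m (rp m a),b),(rm m (rp m a),b),(rp m a,rp n b),(rp m a,rm n b)}"
      using e2 torus_adj_cases by simp
    then show ?thesis using ne rm_rp[OF assms(1)] unfolding L2_def by auto
  next
    assume "w = (rm m a, b)"
    then have "u \<in> {(rp m (rm m a),b),(rm m (rm m a),b),(rm m a,rp n b),(rm m a,rm n b)}"
      using e2 torus_adj_cases by simp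
    then show ?thesis using ne rp_rm[OF assms(1)] unfolding L2_def by auto
  next
    assume "w = (a, rp n b)"
    then have "u \<in> {(rp m a,rp n b),(rm m a,rp n b),(a,rp n (rp n b)),(a,rm n (rp n b))}"
      using e2 torus_adj_cases by simp
    then show ?thesis using ne rm_rp[OF assms(2)] unfolding L2_def by auto
  next
    assume "w = (a, rm n b)"
    then have "u \<in> {(rp m a,rm n b),(rm m a,rm n b),(a,rp n (rm n b)),(a,rm n (rm n b))}"
      using e2 torus_adj_cases by simp
    then show ?thesis using ne rp_rm[OF assms(2)] unfolding L2_def by auto
  qed auto
qed

lemma card_list: "int (card (set L \<inter> S)) \<le> (\<Sum>p\<leftarrow>L. if p \<in> S then 1 else 0::int)"
proof (induction L)
  case Nil then show ?case by simp
next
  case (Cons x L)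
  have "card (set (x#L) \<inter> S) \<le> card (set L \<inter> S) + (if x \<in> S then 1 else 0)"
  proof (cases "x \<in> S")
    case True
    then have "set (x#L) \<inter> S = insert x (set L \<inter> S)" by auto
    then show ?thesis using True by (simp add: card_insert_if)
  next
    case False
    then have "set (x#L) \<inter> S = set L \<inter> S" by auto
    then show ?thesis by simp
  qed
  then show ?case using Cons by (cases "x \<in> S") auto
qed

lemma score:
  assumes d: "disj_dom_set (torus_verts m n) (torus_adj m n) S" and a: "a < m" "b < n"
  shows "2 \<le> 2 * (if (a,b) \<in> S then 1 else 0::int)
     + 2 * (\<Sum>p\<leftarrow>L1 m n a b. if p \<in> S then 1 else 0::int)
     + (\<Sum>p\<leftarrow>L2 m n a b. if p \<in> S then 1 else 0::int)"
proof -
  let ?V = "torus_verts m n" and ?E = "torus_adj m n"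
  have s1: "int (card (nbhd ?V ?E 1 (a,b) \<inter> S)) \<le> (\<Sum>p\<leftarrow>L1 m n a b. if p \<in> S then 1 else 0::int)"
  proof -
    have "card (nbhd ?V ?E 1 (a,b) \<inter> S) \<le> card (set (L1 m n a b) \<inter> S)"
      using nb1[of ?V m n a b] by (intro card_mono) auto
    then show ?thesis using card_list[of "L1 m n a b" S] by linarith
  qed
  have s2: "int (card (nbhd ?V ?E 2 (a,b) \<inter> S)) \<le> (\<Sum>p\<leftarrow>L2 m n a b. if p \<in> S then 1 else 0::int)"
  proof -
    have "card (nbhd ?V ?E 2 (a,b) \<inter> S) \<le> card (set (L2 m n a b) \<inter> S)"
      using nb2[OF a, of ?V] by (intro card_mono) auto
    then show ?thesis using card_list[of "L2 m n a b" S] by linarith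
  qed
  have nn1: "0 \<le> (\<Sum>p\<leftarrow>L1 m n a b. if p \<in> S then 1 else 0::int)"
    by (rule sum_list_nonneg) auto
  have nn2: "0 \<le> (\<Sum>p\<leftarrow>L2 m n a b. if p \<in> S then 1 else 0::int)"
    by (rule sum_list_nonneg) auto
  have V: "(a,b) \<in> ?V" using a by (simp add: torus_verts_def cycle_verts_def)
  show ?thesis
  proof (cases "(a,b) \<in> S")
    case True then show ?thesis using nn1 nn2 by simp
  next
    case False
    then have "card (nbhd ?V ?E 1 (a,b) \<inter> S) \<ge> 1 \<or> card (nbhd ?V ?E 2 (a,b) \<inter> S) \<ge> 2"
      using d V unfolding disj_dom_set_def by blast
    then show ?thesis using s1 s2 nn1 nn2 by auto
  qed
qed

lemma shift_rp: "0 < k \<Longrightarrow> (\<Sum>a<k. g (rp k a)) = (\<Sum>a<k. g a :: int)"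
  by (rule sum.reindex_bij_witness[where i="rm k" and j="rp k"]) (auto simp: rm_rp rp_rm rp_lt rm_lt)

lemma shift_rm: "0 < k \<Longrightarrow> (\<Sum>a<k. g (rm k a)) = (\<Sum>a<k. g a :: int)"
  by (rule sum.reindex_bij_witness[where i="rp k" and j="rm k"]) (auto simp: rm_rp rp_rm rp_lt rm_lt)

lemma int_rp: "0 < n \<Longrightarrow> int (rp n x) = (int x + 1) mod int n"
  by (simp add: rp_def of_nat_mod add.commute)

lemma int_rm: "0 < n \<Longrightarrow> int (rm n x) = (int x - 1) mod int n"
proof -
  assume n: "0 < n"
  have "int (rm n x) = int (x + n - 1) mod int n" by (simp add: rm_def of_nat_mod)
  also have "int (x + n - 1) = (int x - 1) + int n" using n by simp
  finally show ?thesis by simp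
qed

lemma col_card:
  assumes "int c = t mod int n"
  shows "int (card (S \<inter> col m n t)) = (\<Sum>a<m. if (a,c) \<in> S then 1 else 0::int)"
proof -
  have cn: "nat (t mod int n) = c" using assms by simp
  have "S \<inter> col m n t = (\<lambda>i. (i,c)) ` {i \<in> {..<m}. (i,c) \<in> S}"
    unfolding col_def cn by auto
  then have "card (S \<inter> col m n t) = card {i \<in> {..<m}. (i,c) \<in> S}"
    by (simp add: card_image inj_on_def)
  moreover have "(\<Sum>a<m. if (a,c) \<in> S then 1 else 0::int) = int (card {i \<in> {..<m}. (i,c) \<in> S})"
    by (simp add: sum.If_cases Int_def)
  ultimately show ?thesis by simp
qed


theorem lemma1:
  fixes m n :: nat and S :: "(nat \<times> nat) set" and j :: nat
  assumes "m \<ge> 3" and "n \<ge> 5"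
    and "disj_dom_set (torus_verts m n) (torus_adj m n) S"
    and "j < n"
  shows "(let x = (\<lambda>t::int. int (card (S \<inter> col m n t))) in
           x (int j - 2) + 4 * x (int j - 1) + 8 * x (int j) + 4 * x (int j + 1) + x (int j + 2))
         \<ge> 2 * int m"
proof -
  have m0: "0 < m" and n0: "0 < n" using assms by auto
  define I where "I p = (if p \<in> S then 1 else 0::int)" for p
  define X where "X c = (\<Sum>a<m. I (a,c))" for c
  define sc where "sc a = 2 * I (a,j) + 2 * (I (rp m a,j) + I (rm m a,j) + I (a,rp n j) + I (a,rm n j))
     + (I (rp m (rp m a),j) + I (rm m (rm m a),j) + I (a,rp n (rp n j)) + I (a,rm n (rm n j))
        + I (rp m a,rp n j) + I (rp m a,rm n j) + I (rm m a,rp n j) + I (rm m a,rm n j))" for a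
  have sc2: "2 \<le> sc a" if "a < m" for a
    using score[OF assms(3) that assms(4)] unfolding sc_def I_def L1_def L2_def by simp
  have "(\<Sum>a<m. 2) \<le> (\<Sum>a<m. sc a)" by (rule sum_mono) (use sc2 in auto)
  then have low: "2 * int m \<le> (\<Sum>a<m. sc a)" by simp
  have t1: "(\<Sum>a<m. I (rp m a, c)) = X c" for c
    unfolding X_def by (rule shift_rp[OF m0])
  have t2: "(\<Sum>a<m. I (rm m a, c)) = X c" for c
    unfolding X_def by (rule shift_rm[OF m0])
  have t3: "(\<Sum>a<m. I (rp m (rp m a), c)) = X c" for c
    using shift_rp[OF m0, of "\<lambda>a. I (rp m a, c)"] t1 by simp
  have t4: "(\<Sum>a<m. I (rm m (rm m a), c)) = X c" for c
    using shift_rm[OF m0, of "\<lambda>a. I (rm m a, c)"] t2 by simp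
  have t0: "(\<Sum>a<m. I (a, c)) = X c" for c unfolding X_def by simp
  have "(\<Sum>a<m. sc a) = 8 * X j + 4 * X (rp n j) + 4 * X (rm n j) + X (rp n (rp n j)) + X (rm n (rm n j))"
    unfolding sc_def
    by (simp only: sum.distrib sum_distrib_left[symmetric] t0 t1 t2 t3 t4) simp
  moreover
  have c0: "int (card (S \<inter> col m n (int j))) = X j"
    unfolding X_def I_def by (rule col_card) (use assms(4) in simp)
  have c1: "int (card (S \<inter> col m n (int j + 1))) = X (rp n j)"
    unfolding X_def I_def by (rule col_card) (simp add: int_rp[OF n0])
  have c2: "int (card (S \<inter> col m n (int j - 1))) = X (rm n j)"
    unfolding X_def I_def by (rule col_card) (simp add: int_rm[OF n0])
  have c3: "int (card (S \<inter> col m n (int j + 2))) = X (rp n (rp n j))"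
  proof -
    have "int (rp n (rp n j)) = ((int j + 1) mod int n + 1) mod int n" by (simp add: int_rp[OF n0])
    also have "\<dots> = (int j + 2) mod int n" by (metis add.assoc mod_add_left_eq one_add_one)
    finally show ?thesis unfolding X_def I_def by (rule col_card)
  qed
  have c4: "int (card (S \<inter> col m n (int j - 2))) = X (rm n (rm n j))"
    unfolding X_def I_def by (rule col_card) (simp add: int_rm[OF n0] mod_diff_left_eq)
  ultimately show ?thesis using low c0 c1 c2 c3 c4 by (simp add: Let_def)
qed

end
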